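(* Let $R$ be a commutative ring in which $2$ is invertible, let $Q=R$ with quadratic form $q(z)=z^2$, and let $m\ge1$. Identify automorphisms of $Q\perp\mathbb{H}(R)^m$ with matrices in $\mathrm{GL}_{2m+1}(R)$ via the ordered basis $(1,x_1,f_1,x_2,f_2,\dots,x_m,f_m)$. Then $\mathrm{EO}_R(Q,\mathbb{H}(R)^m)=\mathrm{EO}_{2m+1}(R)$.
   Context: For a quadratic form $q$ the bilinear form is $\langle x,y\rangle=q(x+y)-q(x)-q(y)$; thus on $Q=R$, $\langle z,z'\rangle=2zz'$. $\mathbb{H}(R)^m=\mathbb{H}(R^m)=R^m\oplus (R^m)^*$ with basis $x_1,\dots,x_m$ and dual basis $f_1,\dots,f_m$, and $q(y,g)=g(y)$; orthogonal sums carry the sum of forms. With respect to the basis above, the bilinear form on $Q\perp\mathbb{H}(R)^m$ has matrix $(2)\perp\widetilde{\psi}_m$, where $\widetilde{\psi}_s=\sum_{i=1}^s(e_{2i-1,2i}+e_{2i,2i-1})$ and $e_{i,j}$ are matrix units. DSER transformations on $Q\perp\mathbb{H}(P)$: for $\alpha:Q\to P$ let $\alpha^*:P^*\to Q$ satisfy $\langle\alpha^*(g),z\rangle=g(\alpha(z))$ and $E_\alpha(z,y,g)=(z-\alpha^*(g),y+\alpha(z)-\tfrac12\alpha\alpha^*(g),g)$; for $\beta:Q\to P^*$ let $\beta^*:P\to Q$ satisfy $\langle\beta^*(y),z\rangle=\beta(z)(y)$ and $E^*_\beta(z,y,g)=(z-\beta^*(y),y,g+\beta(z)-\tfrac12\beta\beta^*(y))$.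 $\mathrm{EO}_R(Q,\mathbb{H}(P))$ is generated by all $E_\alpha,E^*_\beta$. Odd elementary orthogonal group: for $N=2s+1$ (indices $1,\dots,2s+1$) and $1\le i\le s$, $\lambda\in R$, let $F^1_i(\lambda)=I_N+\lambda(e_{1,2i+1}-2e_{2i,1}-\lambda e_{2i,2i+1})$ and $F^2_i(\lambda)=I_N+\lambda(e_{1,2i}-2e_{2i+1,1}-\lambda e_{2i+1,2i})$ (orthogonal for $(2)\perp\widetilde{\psi}_s$). $\mathrm{EO}_{2s+1}(R)$ is the group generated by all $F^1_i(\lambda),F^2_i(\lambda)$, $\lambda\in R$. *)

theory Defs
  imports "Jordan_Normal_Form.Matrix"
begin

text \<open>Elements of Q \<perp> H(R^m) are triples (z, y, g): z in Q = R, y in R^m given by its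
coordinates y_1..y_m w.r.t. x_1..x_m, and g in (R^m)^* given by its coordinates
g_i = g(x_i) w.r.t. the dual basis f_1..f_m. Coordinates are indexed by 1..m.\<close>

definition qQ :: "'a::comm_ring_1 \<Rightarrow> 'a" where
  "qQ z = z ^ 2"

definition bilQ :: "'a::comm_ring_1 \<Rightarrow> 'a \<Rightarrow> 'a" where
  "bilQ z z' = qQ (z + z') - qQ z - qQ z'"

definition pairing :: "nat \<Rightarrow> (nat \<Rightarrow> 'a::comm_ring_1) \<Rightarrow> (nat \<Rightarrow> 'a) \<Rightarrow> 'a" where
  "pairing m g y = (\<Sum>i=1..m. g i * y i)"

definition half :: "'a::comm_ring_1" where
  "half = (SOME u. 2 * u = 1)"

text \<open>An R-linear map Q = R \<rightarrow> P = R^m is z \<mapsto> z a for a vector a; similarly for Q \<rightarrow> P^*.\<close>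

definition linmap :: "(nat \<Rightarrow> 'a::comm_ring_1) \<Rightarrow> 'a \<Rightarrow> nat \<Rightarrow> 'a" where
  "linmap a z = (\<lambda>i. z * a i)"

definition adj_alpha :: "nat \<Rightarrow> (nat \<Rightarrow> 'a::comm_ring_1) \<Rightarrow> (nat \<Rightarrow> 'a) \<Rightarrow> 'a" where
  "adj_alpha m a g = (THE w. \<forall>z. bilQ w z = pairing m g (linmap a z))"

definition adj_beta :: "nat \<Rightarrow> (nat \<Rightarrow> 'a::comm_ring_1) \<Rightarrow> (nat \<Rightarrow> 'a) \<Rightarrow> 'a" where
  "adj_beta m b y = (THE w. \<forall>z. bilQ w z = pairing m (linmap b z) y)"

definition E_alpha :: "nat \<Rightarrow> (nat \<Rightarrow> 'a::comm_ring_1)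
    \<Rightarrow> 'a \<times> (nat \<Rightarrow> 'a) \<times> (nat \<Rightarrow> 'a) \<Rightarrow> 'a \<times> (nat \<Rightarrow> 'a) \<times> (nat \<Rightarrow> 'a)" where
  "E_alpha m a = (\<lambda>(z, y, g).
     (z - adj_alpha m a g,
      (\<lambda>i. y i + linmap a z i - half * linmap a (adj_alpha m a g) i),
      g))"

definition E_beta :: "nat \<Rightarrow> (nat \<Rightarrow> 'a::comm_ring_1)
    \<Rightarrow> 'a \<times> (nat \<Rightarrow> 'a) \<times> (nat \<Rightarrow> 'a) \<Rightarrow> 'a \<times> (nat \<Rightarrow> 'a) \<times> (nat \<Rightarrow> 'a)" where
  "E_beta m b = (\<lambda>(z, y, g).
     (z - adj_beta m b y,
      y,
      (\<lambda>i. g i + linmap b z i - half * linmap b (adj_beta m b y) i)))"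

text \<open>Matrix indices are 0-based: index 0 is the basis vector 1 of Q,
index 2i-1 is x_i and index 2i is f_i (1 \<le> i \<le> m).\<close>

definition coords :: "nat \<Rightarrow> 'a::comm_ring_1 \<times> (nat \<Rightarrow> 'a) \<times> (nat \<Rightarrow> 'a) \<Rightarrow> 'a vec" where
  "coords m = (\<lambda>(z, y, g). vec (2*m+1)
     (\<lambda>k. if k = 0 then z else if odd k then y ((k+1) div 2) else g (k div 2)))"

definition elt_of :: "nat \<Rightarrow> 'a::comm_ring_1 vec \<Rightarrow> 'a \<times> (nat \<Rightarrow> 'a) \<times> (nat \<Rightarrow> 'a)" where
  "elt_of m v = (v $ 0,
     (\<lambda>i. if 1 \<le> i \<and> i \<le> m then v $ (2*i - 1) else 0),
     (\<lambda>i. if 1 \<le> i \<and> i \<le> m then v $ (2*i) else 0))"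

definition mat_of_map :: "nat \<Rightarrow> ('a::comm_ring_1 \<times> (nat \<Rightarrow> 'a) \<times> (nat \<Rightarrow> 'a)
    \<Rightarrow> 'a \<times> (nat \<Rightarrow> 'a) \<times> (nat \<Rightarrow> 'a)) \<Rightarrow> 'a mat" where
  "mat_of_map m T = mat (2*m+1) (2*m+1)
     (\<lambda>(i, j). coords m (T (elt_of m (unit_vec (2*m+1) j))) $ i)"

definition gen_group :: "nat \<Rightarrow> 'a::comm_ring_1 mat set \<Rightarrow> 'a mat set" where
  "gen_group N S = \<Inter> {H. H \<subseteq> carrier_mat N N \<and> 1\<^sub>m N \<in> H
       \<and> (\<forall>A\<in>H. \<forall>B\<in>H. A * B \<in> H)
       \<and> (\<forall>A\<in>H. \<exists>B\<in>H. A * B = 1\<^sub>m N \<and> B * A = 1\<^sub>m N)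
       \<and> S \<subseteq> H}"

definition EO_QH :: "nat \<Rightarrow> 'a::comm_ring_1 mat set" where
  "EO_QH m = gen_group (2*m+1)
     ({mat_of_map m (E_alpha m a) | a. True} \<union> {mat_of_map m (E_beta m b) | b. True})"

text \<open>Matrix unit e_{i,j} with the paper's 1-based indices (i, j in 1..N).\<close>
definition munit :: "nat \<Rightarrow> nat \<Rightarrow> nat \<Rightarrow> 'a::comm_ring_1 mat" where
  "munit N i j = mat N N (\<lambda>(r, c). if r = i - 1 \<and> c = j - 1 then 1 else 0)"

definition F1 :: "nat \<Rightarrow> nat \<Rightarrow> 'a::comm_ring_1 \<Rightarrow> 'a mat" where
  "F1 N i l = 1\<^sub>m N + l \<cdot>\<^sub>m (munit N 1 (2*i+1) - 2 \<cdot>\<^sub>m munit N (2*i) 1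
                                 - l \<cdot>\<^sub>m munit N (2*i) (2*i+1))"

definition F2 :: "nat \<Rightarrow> nat \<Rightarrow> 'a::comm_ring_1 \<Rightarrow> 'a mat" where
  "F2 N i l = 1\<^sub>m N + l \<cdot>\<^sub>m (munit N 1 (2*i) - 2 \<cdot>\<^sub>m munit N (2*i+1) 1
                                 - l \<cdot>\<^sub>m munit N (2*i+1) (2*i))"

definition EO_odd :: "nat \<Rightarrow> 'a::comm_ring_1 mat set" where
  "EO_odd s = gen_group (2*s+1)
     ({F1 (2*s+1) i l | i l. 1 \<le> i \<and> i \<le> s} \<union> {F2 (2*s+1) i l | i l. 1 \<le> i \<and> i \<le> s})"

end

theory Submission imports Defs begin

lemma half2: assumes "\<exists>u :: 'a :: comm_ring_1. 2 * u = 1" shows "2 * (half::'a) = 1"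
  unfolding half_def using someI_ex[OF assms] .

lemma bilQ_eq: "bilQ w z = 2 * w * z"
  by (simp add: bilQ_def qQ_def power2_eq_square algebra_simps)

lemma pairing_lin: "pairing m g (linmap a z) = z * pairing m g a"
  by (simp add: pairing_def linmap_def sum_distrib_left algebra_simps)

lemma pairing_lin2: "pairing m (linmap b z) y = z * pairing m b y"
  by (simp add: pairing_def linmap_def sum_distrib_left algebra_simps)

lemma half_cancel: assumes "2 * (half::'a::comm_ring_1) = 1" shows "half * (2 * x) = (x::'a)"
  by (metis assms mult.assoc mult.commute mult_1)

lemma adj_alpha_eq: assumes "2 * (half::'a::comm_ring_1) = 1"
  shows "adj_alpha m a g = (half::'a) * pairing m g a"
  unfolding adj_alpha_def
proof (rule the_equality)
  show "\<forall>z. bilQ (half * pairing m g a) z = pairing m g (linmap a z)"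
    using half_cancel[OF assms] by (simp add: bilQ_eq pairing_lin mult.assoc mult.left_commute)
next
  fix w assume "\<forall>z. bilQ w z = pairing m g (linmap a z)"
  then have "bilQ w 1 = pairing m g (linmap a 1)" by blast
  then have "2 * w = pairing m g a" by (simp only: pairing_lin bilQ_eq mult_1_right mult_1_left)
  then show "w = half * pairing m g a" using half_cancel[OF assms, of w] by simp
qed

lemma adj_beta_eq: assumes "2 * (half::'a::comm_ring_1) = 1"
  shows "adj_beta m b y = (half::'a) * pairing m b y"
  unfolding adj_beta_def
proof (rule the_equality)
  show "\<forall>z. bilQ (half * pairing m b y) z = pairing m (linmap b z) y"
    using half_cancel[OF assms] by (simp add: bilQ_eq pairing_lin2 mult.assoc mult.left_commute)
next
  fix w assume "\<forall>z. bilQ w z = pairing m (linmap b z) y"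
  then have "bilQ w 1 = pairing m (linmap b 1) y" by blast
  then have "2 * w = pairing m b y" by (simp only: pairing_lin2 bilQ_eq mult_1_right mult_1_left)
  then show "w = half * pairing m b y" using half_cancel[OF assms, of w] by simp
qed

definition Sg :: "nat \<Rightarrow> (nat \<Rightarrow> nat) \<Rightarrow> (nat \<Rightarrow> 'a::comm_ring_1) \<Rightarrow> 'a vec \<Rightarrow> 'a" where
  "Sg m \<sigma> w v = (\<Sum>q=1..m. v $ (\<sigma> q) * w q)"

definition Gen :: "nat \<Rightarrow> (nat \<Rightarrow> nat) \<Rightarrow> (nat \<Rightarrow> 'a::comm_ring_1) \<Rightarrow> (nat \<Rightarrow> 'a) \<Rightarrow> (nat \<Rightarrow> 'a) \<Rightarrow> 'a vec \<Rightarrow> 'a vec" where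
  "Gen m \<sigma> w al be v = vec (2*m+1) (\<lambda>r. v $ r + v $ 0 * al r - be r * Sg m \<sigma> w v)"

lemma Sg_unit:
  assumes "\<And>q. 1 \<le> q \<Longrightarrow> q \<le> m \<Longrightarrow> \<sigma> q < 2*m+1" and v: "v \<in> carrier_vec (2*m+1)"
  shows "(\<Sum>j<2*m+1. Sg m \<sigma> w (unit_vec (2*m+1) j) * v $ j) = Sg m \<sigma> w v"
proof -
  have "(\<Sum>j<2*m+1. Sg m \<sigma> w (unit_vec (2*m+1) j) * v $ j)
     = (\<Sum>j<2*m+1. \<Sum>q=1..m. (if j = \<sigma> q then w q * v $ j else 0))"
  proof (rule sum.cong)
    fix j assume j: "j \<in> {..<2*m+1}"
    show "Sg m \<sigma> w (unit_vec (2*m+1) j) * v $ j = (\<Sum>q=1..m. (if j = \<sigma> q then w q * v $ j else 0))"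
      unfolding Sg_def sum_distrib_right
      by (rule sum.cong) (use j assms in auto)
  qed simp
  also have "\<dots> = (\<Sum>q=1..m. \<Sum>j<2*m+1. (if j = \<sigma> q then w q * v $ j else 0))"
    by (rule sum.swap)
  also have "\<dots> = (\<Sum>q=1..m. w q * v $ (\<sigma> q))"
  proof (rule sum.cong)
    fix q assume q: "q \<in> {1..m}"
    then have "\<sigma> q \<in> {..<2*m+1}" using assms(1)[of q] by auto
    then show "(\<Sum>j<2*m+1. (if j = \<sigma> q then w q * v $ j else 0)) = w q * v $ (\<sigma> q)"
      by (simp only: sum.delta finite_lessThan if_True)
  qed simp
  finally show ?thesis by (simp add: Sg_def mult.commute)
qed

lemma Gen_mat:
  assumes "\<And>q. 1 \<le> q \<Longrightarrow> q \<le> m \<Longrightarrow> \<sigma> q < 2*m+1" and v: "v \<in> carrier_vec (2*m+1)"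
  shows "mat (2*m+1) (2*m+1) (\<lambda>(i,j). Gen m \<sigma> w al be (unit_vec (2*m+1) j) $ i) *\<^sub>v v = Gen m \<sigma> w al be v"
proof (rule eq_vecI)
  fix r assume r: "r < dim_vec (Gen m \<sigma> w al be v)"
  then have r': "r < 2*m+1" by (simp add: Gen_def)
  have "(mat (2*m+1) (2*m+1) (\<lambda>(i,j). Gen m \<sigma> w al be (unit_vec (2*m+1) j) $ i) *\<^sub>v v) $ r
     = (\<Sum>j<2*m+1. ((if r = j then 1 else 0) + (if j = 0 then 1 else 0) * al r
          - be r * Sg m \<sigma> w (unit_vec (2*m+1) j)) * v $ j)"
    using r' v by (auto simp: scalar_prod_def Gen_def lessThan_atLeast0 intro!: sum.cong)
  also have "\<dots> = (\<Sum>j<2*m+1. (if j = r then v $ j else 0) + (if j = 0 then v $ j * al r else 0)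
          - be r * (Sg m \<sigma> w (unit_vec (2*m+1) j) * v $ j))"
    by (rule sum.cong) (auto simp: algebra_simps)
  also have "\<dots> = (\<Sum>j<2*m+1. (if j = r then v $ j else 0)) + (\<Sum>j<2*m+1. (if j = 0 then v $ j * al r else 0))
        - be r * (\<Sum>j<2*m+1. Sg m \<sigma> w (unit_vec (2*m+1) j) * v $ j)"
    by (simp only: sum.distrib sum_subtractf sum_distrib_left)
  also have "\<dots> = Gen m \<sigma> w al be v $ r"
    using r' by (simp only: Sg_unit[OF assms] sum.delta finite_lessThan) (simp add: Gen_def)
  finally show "(mat (2*m+1) (2*m+1) (\<lambda>(i,j). Gen m \<sigma> w al be (unit_vec (2*m+1) j) $ i) *\<^sub>v v) $ r = Gen m \<sigma> w al be v $ r" .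
qed (simp add: Gen_def)


definition alA :: "(nat \<Rightarrow> 'a::comm_ring_1) \<Rightarrow> nat \<Rightarrow> 'a" where
  "alA a r = (if r = 0 then 0 else if odd r then a ((r+1) div 2) else 0)"
definition beA :: "(nat \<Rightarrow> 'a::comm_ring_1) \<Rightarrow> nat \<Rightarrow> 'a" where
  "beA a r = (if r = 0 then half else if odd r then half * (half * a ((r+1) div 2)) else 0)"
definition alB :: "(nat \<Rightarrow> 'a::comm_ring_1) \<Rightarrow> nat \<Rightarrow> 'a" where
  "alB a r = (if r = 0 then 0 else if odd r then 0 else a (r div 2))"
definition beB :: "(nat \<Rightarrow> 'a::comm_ring_1) \<Rightarrow> nat \<Rightarrow> 'a" where
  "beB a r = (if r = 0 then half else if odd r then 0 else half * (half * a (r div 2)))"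

definition PA :: "nat \<Rightarrow> (nat \<Rightarrow> 'a::comm_ring_1) \<Rightarrow> 'a vec \<Rightarrow> 'a vec" where
  "PA m a = Gen m (\<lambda>q. 2*q) a (alA a) (beA a)"
definition PB :: "nat \<Rightarrow> (nat \<Rightarrow> 'a::comm_ring_1) \<Rightarrow> 'a vec \<Rightarrow> 'a vec" where
  "PB m a = Gen m (\<lambda>q. 2*q-1) a (alB a) (beB a)"

lemma odd_idx: assumes "odd (r::nat)" "r < 2*m+1"
  shows "1 \<le> (r+1) div 2" "(r+1) div 2 \<le> m" "2 * ((r+1) div 2) - 1 = r" "2 * ((r+1) div 2) = r + 1"
  using assms by (auto elim!: oddE)

lemma even_idx: assumes "even (r::nat)" "r \<noteq> 0" "r < 2*m+1"
  shows "1 \<le> r div 2" "r div 2 \<le> m" "2 * (r div 2) = r"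
  using assms by (auto elim!: evenE)

lemma coords_idx: "r < 2*m+1 \<Longrightarrow> coords m (z, y, g) $ r =
   (if r = 0 then z else if odd r then y ((r+1) div 2) else g (r div 2))"
  by (simp add: coords_def)

lemma Gen_idx: "r < 2*m+1 \<Longrightarrow> Gen m \<sigma> w al be v $ r = v $ r + v $ 0 * al r - be r * Sg m \<sigma> w v"
  by (simp add: Gen_def)

lemma coordsA: assumes h: "2 * (half::'a::comm_ring_1) = 1" and v: "v \<in> carrier_vec (2*m+1)"
  shows "coords m (E_alpha m a (elt_of m (v::'a vec))) = PA m a v"
proof -
  have P: "pairing m (\<lambda>i. if 1 \<le> i \<and> i \<le> m then v $ (2*i) else 0) a = Sg m (\<lambda>q. 2*q) a v"
    unfolding pairing_def Sg_def by (rule sum.cong) auto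
  show ?thesis
  proof (rule eq_vecI)
    fix r assume "r < dim_vec (PA m a v)"
    then have r: "r < 2*m+1" by (simp add: PA_def Gen_def)
    have r': "r < Suc (2*m)" using r by simp
    consider "r = 0" | "odd r" | "even r" "r \<noteq> 0" by auto
    then show "coords m (E_alpha m a (elt_of m v)) $ r = PA m a v $ r"
    proof cases
      case 1 then show ?thesis
        by (simp add: coords_def Gen_def E_alpha_def elt_of_def adj_alpha_eq[OF h] P[simplified] PA_def alA_def beA_def)
    next
      case 2 then show ?thesis using odd_idx[OF 2 r]
        by (simp add: coords_idx[OF r] Gen_idx[OF r] E_alpha_def elt_of_def adj_alpha_eq[OF h] P[simplified] PA_def alA_def beA_def linmap_def algebra_simps)
    next
      case 3 then show ?thesis using even_idx[OF 3 r]
        by (simp add: coords_idx[OF r] Gen_idx[OF r] E_alpha_def elt_of_def adj_alpha_eq[OF h] P[simplified] PA_def alA_def beA_def)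
    qed
  qed (simp add: coords_def PA_def Gen_def split: prod.split)
qed

lemma coordsB: assumes h: "2 * (half::'a::comm_ring_1) = 1" and v: "v \<in> carrier_vec (2*m+1)"
  shows "coords m (E_beta m a (elt_of m (v::'a vec))) = PB m a v"
proof -
  have P: "pairing m a (\<lambda>i. if 1 \<le> i \<and> i \<le> m then v $ (2*i-1) else 0) = Sg m (\<lambda>q. 2*q-1) a v"
    unfolding pairing_def Sg_def by (rule sum.cong) (auto simp: mult.commute)
  show ?thesis
  proof (rule eq_vecI)
    fix r assume "r < dim_vec (PB m a v)"
    then have r: "r < 2*m+1" by (simp add: PB_def Gen_def)
    have r': "r < Suc (2*m)" using r by simp
    consider "r = 0" | "odd r" | "even r" "r \<noteq> 0" by auto
    then show "coords m (E_beta m a (elt_of m v)) $ r = PB m a v $ r"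
    proof cases
      case 1 then show ?thesis
        by (simp add: coords_def Gen_def E_beta_def elt_of_def adj_beta_eq[OF h] P[simplified] PB_def alB_def beB_def)
    next
      case 2 then show ?thesis using odd_idx[OF 2 r]
        by (simp add: coords_idx[OF r] Gen_idx[OF r] E_beta_def elt_of_def adj_beta_eq[OF h] P[simplified] PB_def alB_def beB_def)
    next
      case 3 then show ?thesis using even_idx[OF 3 r]
        by (simp add: coords_idx[OF r] Gen_idx[OF r] E_beta_def elt_of_def adj_beta_eq[OF h] P[simplified] PB_def alB_def beB_def linmap_def algebra_simps)
    qed
  qed (simp add: coords_def PB_def Gen_def split: prod.split)
qed

lemma MA_eq: assumes h: "2 * (half::'a::comm_ring_1) = 1"
  shows "(mat_of_map m (E_alpha m a) :: 'a mat) = mat (2*m+1) (2*m+1) (\<lambda>(i,j). PA m a (unit_vec (2*m+1) j) $ i)"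
  unfolding mat_of_map_def by (rule eq_matI) (auto simp: coordsA[OF h])

lemma MB_eq: assumes h: "2 * (half::'a::comm_ring_1) = 1"
  shows "(mat_of_map m (E_beta m a) :: 'a mat) = mat (2*m+1) (2*m+1) (\<lambda>(i,j). PB m a (unit_vec (2*m+1) j) $ i)"
  unfolding mat_of_map_def by (rule eq_matI) (auto simp: coordsB[OF h])

lemma MA_carrier[simp]: "mat_of_map m T \<in> carrier_mat (2*m+1) (2*m+1)"
  unfolding mat_of_map_def by simp

lemma PA_carrier[simp]: "PA m a v \<in> carrier_vec (2*m+1)"
  by (simp add: PA_def Gen_def)
lemma PB_carrier[simp]: "PB m a v \<in> carrier_vec (2*m+1)"
  by (simp add: PB_def Gen_def)

lemma MA_vec: assumes h: "2 * (half::'a::comm_ring_1) = 1" and v: "v \<in> carrier_vec (2*m+1)"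
  shows "(mat_of_map m (E_alpha m a) :: 'a mat) *\<^sub>v v = PA m a v"
  unfolding MA_eq[OF h] PA_def by (rule Gen_mat) (use v in auto)

lemma MB_vec: assumes h: "2 * (half::'a::comm_ring_1) = 1" and v: "v \<in> carrier_vec (2*m+1)"
  shows "(mat_of_map m (E_beta m a) :: 'a mat) *\<^sub>v v = PB m a v"
  unfolding MB_eq[OF h] PB_def by (rule Gen_mat) (use v in auto)

lemma mat_unit_entry: assumes A: "(A::'a::comm_ring_1 mat) \<in> carrier_mat n n" and i: "i < n" and j: "j < n"
  shows "(A *\<^sub>v unit_vec n j) $ i = A $$ (i, j)"
proof -
  have "(A *\<^sub>v unit_vec n j) $ i = (\<Sum>k\<in>{0..<n}. A $$ (i,k) * (if k = j then 1 else 0))"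
    using A i j by (auto simp: scalar_prod_def intro!: sum.cong)
  also have "\<dots> = (\<Sum>k\<in>{0..<n}. (if k = j then A $$ (i,k) else 0))"
    by (rule sum.cong) auto
  also have "\<dots> = A $$ (i,j)" using j by (simp only: sum.delta finite_atLeastLessThan) simp
  finally show ?thesis .
qed

lemma mat_eq_vec: assumes A: "(A::'a::comm_ring_1 mat) \<in> carrier_mat n n" and B: "B \<in> carrier_mat n n"
  and eq: "\<And>v. v \<in> carrier_vec n \<Longrightarrow> A *\<^sub>v v = B *\<^sub>v v"
  shows "A = B"
proof (rule eq_matI)
  fix i j assume "i < dim_row B" "j < dim_col B"
  then have i: "i < n" and j: "j < n" using B by auto
  show "A $$ (i, j) = B $$ (i, j)"
    using mat_unit_entry[OF A i j] mat_unit_entry[OF B i j] eq[of "unit_vec n j"] by simp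
qed (use A B in auto)


lemma Sg_add: "Sg m \<sigma> (\<lambda>i. x i + y i) v = Sg m \<sigma> x v + Sg m \<sigma> y v"
  by (simp add: Sg_def sum.distrib distrib_left)
lemma Sg_neg: "Sg m \<sigma> (\<lambda>i. - x i) v = - Sg m \<sigma> x v"
  by (simp add: Sg_def sum_negf)
lemma Sg_scale: "Sg m \<sigma> (\<lambda>i. k * x i) v = k * Sg m \<sigma> x v"
  by (simp add: Sg_def sum_distrib_left algebra_simps)

lemma PA_0: "PA m a v $ 0 = v $ 0 - half * Sg m (\<lambda>q. 2*q) a v"
  by (simp add: PA_def Gen_def alA_def beA_def)
lemma PA_odd: "r < 2*m+1 \<Longrightarrow> odd r \<Longrightarrow> PA m a v $ r =
   v $ r + v $ 0 * a ((r+1) div 2) - half * (half * a ((r+1) div 2)) * Sg m (\<lambda>q. 2*q) a v"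
  by (auto simp add: PA_def Gen_idx alA_def beA_def)
lemma PA_ev: "r < 2*m+1 \<Longrightarrow> even r \<Longrightarrow> r \<noteq> 0 \<Longrightarrow> PA m a v $ r = v $ r"
  by (auto simp add: PA_def Gen_idx alA_def beA_def)
lemma Sg_PA: "Sg m (\<lambda>q. 2*q) w (PA m a v) = Sg m (\<lambda>q. 2*q) w v"
  unfolding Sg_def by (rule sum.cong) (auto simp: PA_ev)

lemma PB_0: "PB m a v $ 0 = v $ 0 - half * Sg m (\<lambda>q. 2*q-1) a v"
  by (simp add: PB_def Gen_def alB_def beB_def)
lemma PB_ev: "r < 2*m+1 \<Longrightarrow> even r \<Longrightarrow> r \<noteq> 0 \<Longrightarrow> PB m a v $ r =
   v $ r + v $ 0 * a (r div 2) - half * (half * a (r div 2)) * Sg m (\<lambda>q. 2*q-1) a v"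
  by (auto simp add: PB_def Gen_idx alB_def beB_def)
lemma PB_odd: "r < 2*m+1 \<Longrightarrow> odd r \<Longrightarrow> PB m a v $ r = v $ r"
  by (auto simp add: PB_def Gen_idx alB_def beB_def)
lemma Sg_PB: "Sg m (\<lambda>q. 2*q-1) w (PB m a v) = Sg m (\<lambda>q. 2*q-1) w v"
  unfolding Sg_def by (rule sum.cong) (auto simp: PB_odd)


lemma ringA: fixes h :: "'a::comm_ring_1" assumes h: "2 * h = 1"
  shows "((vr + (v0 * (X + C))) - ((h * (h * (X + C))) * (SX + SC))) = ((((((((((((vr + (v0 * (h * C))) - ((h * (h * (h * C))) * (h * SC))) + ((v0 - (h * (h * SC))) * (- X))) - ((h * (h * (- X))) * (- SX))) + (((v0 - (h * (h * SC))) - (h * (- SX))) * (- (h * C)))) - ((h * (h * (- (h * C)))) * (- (h * SC)))) + ((((v0 - (h * (h * SC))) - (h * (- SX))) - (h * (- (h * SC)))) * X)) - ((h * (h * X)) * SX)) + (((((v0 - (h * (h * SC))) - (h * (- SX))) - (h * (- (h * SC)))) - (h * SX)) * C)) - ((h * (h * C)) * SC)) + ((((((v0 - (h * (h * SC))) - (h * (- SX))) - (h * (- (h * SC)))) - (h * SX)) - (h * SC)) * X)) - ((h * (h * X)) * SX))" (is "?L = ?R")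
proof -
  have "?L - ?R = (2 * h - 1) * (-(h*X*SC) + h*X*SX + h*h*h*C*SC)"
    by (simp add: algebra_simps)
  then have "?L - ?R = 0" by (simp only: h diff_self mult_zero_left)
  then show ?thesis by (simp only: right_minus_eq)
qed

lemma KA: assumes h: "2 * (half::'a::comm_ring_1) = 1"
  shows "PA m (\<lambda>i. x i + c i) (v::'a vec) = PA m x (PA m c (PA m x (PA m (\<lambda>i. -(half * c i))
            (PA m (\<lambda>i. - x i) (PA m (\<lambda>i. half * c i) v)))))"
proof (rule eq_vecI)
  fix r assume "r < dim_vec (PA m x (PA m c (PA m x (PA m (\<lambda>i. -(half * c i))
            (PA m (\<lambda>i. - x i) (PA m (\<lambda>i. half * c i) v))))))"
  then have r: "r < 2*m+1" by (simp add: PA_def Gen_def)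
  consider "r = 0" | "odd r" | "even r" "r \<noteq> 0" by auto
  then show "PA m (\<lambda>i. x i + c i) v $ r = PA m x (PA m c (PA m x (PA m (\<lambda>i. -(half * c i))
            (PA m (\<lambda>i. - x i) (PA m (\<lambda>i. half * c i) v))))) $ r"
  proof cases
    case 1 then show ?thesis using h
      by (simp add: PA_0 Sg_PA Sg_add Sg_neg Sg_scale) (simp add: algebra_simps)
  next
    case 2 then show ?thesis
      by (simp only: PA_0 PA_odd[OF r 2] Sg_PA Sg_add Sg_neg Sg_scale) (rule ringA[OF h])
  next
    case 3 then show ?thesis by (simp add: PA_ev[OF r])
  qed
qed (simp add: PA_def Gen_def)

lemma KB: assumes h: "2 * (half::'a::comm_ring_1) = 1"
  shows "PB m (\<lambda>i. x i + c i) (v::'a vec) = PB m x (PB m c (PB m x (PB m (\<lambda>i. -(half * c i))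
            (PB m (\<lambda>i. - x i) (PB m (\<lambda>i. half * c i) v)))))"
proof (rule eq_vecI)
  fix r assume "r < dim_vec (PB m x (PB m c (PB m x (PB m (\<lambda>i. -(half * c i))
            (PB m (\<lambda>i. - x i) (PB m (\<lambda>i. half * c i) v))))))"
  then have r: "r < 2*m+1" by (simp add: PB_def Gen_def)
  consider "r = 0" | "odd r" | "even r" "r \<noteq> 0" by auto
  then show "PB m (\<lambda>i. x i + c i) v $ r = PB m x (PB m c (PB m x (PB m (\<lambda>i. -(half * c i))
            (PB m (\<lambda>i. - x i) (PB m (\<lambda>i. half * c i) v))))) $ r"
  proof cases
    case 1 then show ?thesis using h
      by (simp add: PB_0 Sg_PB[simplified] Sg_add Sg_neg Sg_scale) (simp add: algebra_simps)
  next
    case 3 then show ?thesis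
      by (simp only: PB_0 PB_ev[OF r 3] Sg_PB Sg_add Sg_neg Sg_scale) (rule ringA[OF h])
  next
    case 2 then show ?thesis by (simp add: PB_odd[OF r])
  qed
qed (simp add: PB_def Gen_def)

lemma ringInv: fixes h :: "'a::comm_ring_1" assumes h: "2 * h = 1"
  shows "((vr + v0 * (- X)) - (h * (h * (- X))) * (- SX)) + (v0 - h * (- SX)) * X - (h * (h * X)) * SX = vr"
    (is "?L = ?R")
proof -
  have "?L - ?R = (2 * h - 1) * (- (h * X * SX))" by (simp add: algebra_simps)
  then have "?L - ?R = 0" by (simp only: h diff_self mult_zero_left)
  then show ?thesis by (simp only: right_minus_eq)
qed

lemma MAc[simp]: "mat_of_map m T \<in> carrier_mat (Suc (2*m)) (Suc (2*m))"
  unfolding mat_of_map_def by simp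
lemma MAmul_c[simp]: "A \<in> carrier_mat (Suc (2*m)) (Suc (2*m)) \<Longrightarrow> A * mat_of_map m T \<in> carrier_mat (Suc (2*m)) (Suc (2*m))"
  by (rule mult_carrier_mat[OF _ MAc])
lemma MAmul_v[simp]: "A \<in> carrier_mat (Suc (2*m)) (Suc (2*m)) \<Longrightarrow> v \<in> carrier_vec (Suc (2*m)) \<Longrightarrow>
   (A * mat_of_map m T) *\<^sub>v v = A *\<^sub>v (mat_of_map m T *\<^sub>v v)"
  by (rule assoc_mult_mat_vec) auto
lemma PAc[simp]: "PA m a v \<in> carrier_vec (Suc (2*m))" by (simp add: PA_def Gen_def)
lemma PBc[simp]: "PB m a v \<in> carrier_vec (Suc (2*m))" by (simp add: PB_def Gen_def)

lemma PA_inv: assumes h: "2 * (half::'a::comm_ring_1) = 1" and v: "v \<in> carrier_vec (2*m+1)"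
  shows "PA m x (PA m (\<lambda>i. - x i) (v::'a::comm_ring_1 vec)) = v"
proof (rule eq_vecI)
  fix r assume "r < dim_vec v"
  then have r: "r < 2*m+1" using v by simp
  consider "r = 0" | "odd r" | "even r" "r \<noteq> 0" by auto
  then show "PA m x (PA m (\<lambda>i. - x i) v) $ r = v $ r"
  proof cases
    case 1 then show ?thesis by (simp add: PA_0 Sg_PA Sg_neg)
  next
    case 2 then show ?thesis by (simp only: PA_0 PA_odd[OF r 2] Sg_PA Sg_neg) (rule ringInv[OF h])
  next
    case 3 then show ?thesis by (simp add: PA_ev[OF r])
  qed
qed (use v in \<open>simp add: PA_def Gen_def\<close>)

lemma PB_inv: assumes h: "2 * (half::'a::comm_ring_1) = 1" and v: "v \<in> carrier_vec (2*m+1)"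
  shows "PB m x (PB m (\<lambda>i. - x i) (v::'a::comm_ring_1 vec)) = v"
proof (rule eq_vecI)
  fix r assume "r < dim_vec v"
  then have r: "r < 2*m+1" using v by simp
  consider "r = 0" | "odd r" | "even r" "r \<noteq> 0" by auto
  then show "PB m x (PB m (\<lambda>i. - x i) v) $ r = v $ r"
  proof cases
    case 1 then show ?thesis by (simp add: PB_0 Sg_PB[simplified] Sg_neg)
  next
    case 3 then show ?thesis by (simp only: PB_0 PB_ev[OF r 3] Sg_PB Sg_neg) (rule ringInv[OF h])
  next
    case 2 then show ?thesis by (simp add: PB_odd[OF r])
  qed
qed (use v in \<open>simp add: PB_def Gen_def\<close>)

lemma PA_cong: assumes "\<And>i. 1 \<le> i \<Longrightarrow> i \<le> m \<Longrightarrow> a i = b i"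
  shows "PA m a v = PA m b v"
proof -
  have S: "Sg m \<sigma> a w = Sg m \<sigma> b w" for \<sigma> w unfolding Sg_def by (rule sum.cong) (auto simp: assms)
  show ?thesis
  proof (rule eq_vecI)
    fix r assume "r < dim_vec (PA m b v)"
    then have r: "r < 2*m+1" by (simp add: PA_def Gen_def)
    consider "r = 0" | "odd r" | "even r" "r \<noteq> 0" by auto
    then show "PA m a v $ r = PA m b v $ r"
    proof cases
      case 1 then show ?thesis by (simp add: PA_0 S)
    next
      case 2 then show ?thesis using odd_idx[OF 2 r] by (simp add: PA_odd[OF r] S assms)
    next
      case 3 then show ?thesis by (simp add: PA_ev[OF r])
    qed
  qed (simp add: PA_def Gen_def)
qed

lemma PB_cong: assumes "\<And>i. 1 \<le> i \<Longrightarrow> i \<le> m \<Longrightarrow> a i = b i"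
  shows "PB m a v = PB m b v"
proof -
  have S: "Sg m \<sigma> a w = Sg m \<sigma> b w" for \<sigma> w unfolding Sg_def by (rule sum.cong) (auto simp: assms)
  show ?thesis
  proof (rule eq_vecI)
    fix r assume "r < dim_vec (PB m b v)"
    then have r: "r < 2*m+1" by (simp add: PB_def Gen_def)
    consider "r = 0" | "odd r" | "even r" "r \<noteq> 0" by auto
    then show "PB m a v $ r = PB m b v $ r"
    proof cases
      case 1 then show ?thesis by (simp add: PB_0 S)
    next
      case 3 then show ?thesis using even_idx[OF 3 r] by (simp add: PB_ev[OF r] S assms)
    next
      case 2 then show ?thesis by (simp add: PB_odd[OF r])
    qed
  qed (simp add: PB_def Gen_def)
qed

lemma MA_cong: assumes h: "2 * (half::'a::comm_ring_1) = 1"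
  and "\<And>i. 1 \<le> i \<Longrightarrow> i \<le> m \<Longrightarrow> a i = b i"
  shows "(mat_of_map m (E_alpha m a) :: 'a mat) = mat_of_map m (E_alpha m b)"
  by (rule mat_eq_vec[OF MA_carrier MA_carrier]) (simp add: MA_vec[OF h] PA_cong[OF assms(2)])

lemma MB_cong: assumes h: "2 * (half::'a::comm_ring_1) = 1"
  and "\<And>i. 1 \<le> i \<Longrightarrow> i \<le> m \<Longrightarrow> a i = b i"
  shows "(mat_of_map m (E_beta m a) :: 'a mat) = mat_of_map m (E_beta m b)"
  by (rule mat_eq_vec[OF MA_carrier MA_carrier]) (simp add: MB_vec[OF h] PB_cong[OF assms(2)])

lemma MA_inv: assumes h: "2 * (half::'a::comm_ring_1) = 1"
  shows "(mat_of_map m (E_alpha m x) :: 'a mat) * mat_of_map m (E_alpha m (\<lambda>i. - x i)) = 1\<^sub>m (2*m+1)"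
  by (rule mat_eq_vec[OF mult_carrier_mat[OF MA_carrier MA_carrier] one_carrier_mat])
     (simp add: MA_vec[OF h] PA_inv[OF h])

lemma MB_inv: assumes h: "2 * (half::'a::comm_ring_1) = 1"
  shows "(mat_of_map m (E_beta m x) :: 'a mat) * mat_of_map m (E_beta m (\<lambda>i. - x i)) = 1\<^sub>m (2*m+1)"
  by (rule mat_eq_vec[OF mult_carrier_mat[OF MA_carrier MA_carrier] one_carrier_mat])
     (simp add: MB_vec[OF h] PB_inv[OF h])

lemma MA6: assumes h: "2 * (half::'a::comm_ring_1) = 1"
  shows "(mat_of_map m (E_alpha m (\<lambda>i. x i + c i)) :: 'a mat) =
    mat_of_map m (E_alpha m x) * mat_of_map m (E_alpha m c) * mat_of_map m (E_alpha m x)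
    * mat_of_map m (E_alpha m (\<lambda>i. -(half * c i))) * mat_of_map m (E_alpha m (\<lambda>i. - x i))
    * mat_of_map m (E_alpha m (\<lambda>i. half * c i))"
  by (rule mat_eq_vec[OF MA_carrier]) (simp_all add: MA_vec[OF h] KA[OF h])

lemma MB6: assumes h: "2 * (half::'a::comm_ring_1) = 1"
  shows "(mat_of_map m (E_beta m (\<lambda>i. x i + c i)) :: 'a mat) =
    mat_of_map m (E_beta m x) * mat_of_map m (E_beta m c) * mat_of_map m (E_beta m x)
    * mat_of_map m (E_beta m (\<lambda>i. -(half * c i))) * mat_of_map m (E_beta m (\<lambda>i. - x i))
    * mat_of_map m (E_beta m (\<lambda>i. half * c i))"
  by (rule mat_eq_vec[OF MA_carrier]) (simp_all add: MB_vec[OF h] KB[OF h])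


lemma SgU: assumes "1 \<le> i" "i \<le> m" "j < 2*m+1" "\<And>q. 1 \<le> q \<Longrightarrow> q \<le> m \<Longrightarrow> \<sigma> q < 2*m+1"
  shows "Sg m \<sigma> (\<lambda>k. if k = i then t else 0) (unit_vec (2*m+1) j) = (if j = \<sigma> i then t else 0)"
proof -
  have "Sg m \<sigma> (\<lambda>k. if k = i then t else 0) (unit_vec (2*m+1) j)
      = (\<Sum>q\<in>{1..m}. if q = i then unit_vec (2*m+1) j $ \<sigma> q * t else 0)"
    unfolding Sg_def by (rule sum.cong) auto
  also have "\<dots> = unit_vec (2*m+1) j $ \<sigma> i * t" using assms by (simp add: sum.delta)
  also have "\<dots> = (if j = \<sigma> i then t else 0)" using assms by auto
  finally show ?thesis .
qed

lemma munit_idx: "r < N \<Longrightarrow> c < N \<Longrightarrow> munit N i j $$ (r, c) = (if r = i - 1 \<and> c = j - 1 then 1 else 0)"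
  by (simp add: munit_def)

lemma munit_dim[simp]: "dim_row (munit N i j) = N" "dim_col (munit N i j) = N"
  by (simp_all add: munit_def)

lemma F1_eq: assumes h: "2 * (half::'a::comm_ring_1) = 1" and i: "1 \<le> i" "i \<le> m"
  shows "F1 (2*m+1) i l = (mat_of_map m (E_alpha m (\<lambda>k. if k = i then -(2*l) else 0)) :: 'a mat)"
proof -
  define t where "t = -(2*l)"
  have e1: "half * t = - l" unfolding t_def using half_cancel[OF h, of l] by simp
  have e2: "half * (half * t) * t = l * l" using e1 by (simp add: algebra_simps t_def)
  have "half * (half * (l * (l * 4))) = (2*half) * ((2*half) * (l*l))" by (simp add: algebra_simps)
  then have e3: "half * (half * (l * (l * 4))) = l * l" using h by simp
  show ?thesis unfolding MA_eq[OF h] t_def[symmetric]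
  proof (rule eq_matI)
    fix r j assume "r < dim_row (mat (2*m+1) (2*m+1) (\<lambda>(rr,cc). PA m (\<lambda>k. if k = i then t else 0) (unit_vec (2*m+1) cc) $ rr))"
      "j < dim_col (mat (2*m+1) (2*m+1) (\<lambda>(rr,cc). PA m (\<lambda>k. if k = i then t else 0) (unit_vec (2*m+1) cc) $ rr))"
    then have r: "r < 2*m+1" and j: "j < 2*m+1" by auto
    have S: "Sg m (\<lambda>q. 2*q) (\<lambda>k. if k = i then t else 0) (unit_vec (2*m+1) j) = (if j = 2*i then t else 0)"
      by (rule SgU) (use i j in auto)
    have P: "PA m (\<lambda>k. if k = i then t else 0) (unit_vec (2*m+1) j) $ r =
       unit_vec (2*m+1) j $ r + unit_vec (2*m+1) j $ 0 * alA (\<lambda>k. if k = i then t else 0) r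
         - beA (\<lambda>k. if k = i then t else 0) r * (if j = 2*i then t else 0)"
      unfolding PA_def Gen_idx[OF r] S ..
    have F: "F1 (2*m+1) i l $$ (r, j) = (if r = j then 1 else 0) + l * ((if r = 0 \<and> j = 2*i then 1 else 0)
        - 2 * (if r = 2*i-1 \<and> j = 0 then 1 else 0) - l * (if r = 2*i-1 \<and> j = 2*i then 1 else 0))"
      using r j by (simp add: F1_def munit_idx)
    show "F1 (2*m+1) i l $$ (r, j) = mat (2*m+1) (2*m+1) (\<lambda>(rr,cc). PA m (\<lambda>k. if k = i then t else 0) (unit_vec (2*m+1) cc) $ rr) $$ (r, j)"
      using r j i e1 e2 e3 unfolding F index_mat[OF r j] split P
      by (auto simp: alA_def beA_def t_def algebra_simps elim!: oddE)
  qed (simp_all add: F1_def munit_def)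
qed

lemma F2_eq: assumes h: "2 * (half::'a::comm_ring_1) = 1" and i: "1 \<le> i" "i \<le> m"
  shows "F2 (2*m+1) i l = (mat_of_map m (E_beta m (\<lambda>k. if k = i then -(2*l) else 0)) :: 'a mat)"
proof -
  define t where "t = -(2*l)"
  have e1: "half * t = - l" unfolding t_def using half_cancel[OF h, of l] by simp
  have e2: "half * (half * t) * t = l * l" using e1 by (simp add: algebra_simps t_def)
  have "half * (half * (l * (l * 4))) = (2*half) * ((2*half) * (l*l))" by (simp add: algebra_simps)
  then have e3: "half * (half * (l * (l * 4))) = l * l" using h by simp
  show ?thesis unfolding MB_eq[OF h] t_def[symmetric]
  proof (rule eq_matI)
    fix r j assume "r < dim_row (mat (2*m+1) (2*m+1) (\<lambda>(rr,cc). PB m (\<lambda>k. if k = i then t else 0) (unit_vec (2*m+1) cc) $ rr))"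
      "j < dim_col (mat (2*m+1) (2*m+1) (\<lambda>(rr,cc). PB m (\<lambda>k. if k = i then t else 0) (unit_vec (2*m+1) cc) $ rr))"
    then have r: "r < 2*m+1" and j: "j < 2*m+1" by auto
    have S: "Sg m (\<lambda>q. 2*q-1) (\<lambda>k. if k = i then t else 0) (unit_vec (2*m+1) j) = (if j = 2*i-1 then t else 0)"
      by (rule SgU) (use i j in auto)
    have P: "PB m (\<lambda>k. if k = i then t else 0) (unit_vec (2*m+1) j) $ r =
       unit_vec (2*m+1) j $ r + unit_vec (2*m+1) j $ 0 * alB (\<lambda>k. if k = i then t else 0) r
         - beB (\<lambda>k. if k = i then t else 0) r * (if j = 2*i-1 then t else 0)"
      unfolding PB_def Gen_idx[OF r] S ..
    have F: "F2 (2*m+1) i l $$ (r, j) = (if r = j then 1 else 0) + l * ((if r = 0 \<and> j = 2*i-1 then 1 else 0)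
        - 2 * (if r = 2*i \<and> j = 0 then 1 else 0) - l * (if r = 2*i \<and> j = 2*i-1 then 1 else 0))"
      using r j by (simp add: F2_def munit_idx)
    show "F2 (2*m+1) i l $$ (r, j) = mat (2*m+1) (2*m+1) (\<lambda>(rr,cc). PB m (\<lambda>k. if k = i then t else 0) (unit_vec (2*m+1) cc) $ rr) $$ (r, j)"
      using r j i e1 e2 e3 unfolding F index_mat[OF r j] split P
      by (auto simp: alB_def beB_def t_def algebra_simps elim!: evenE)
  qed (simp_all add: F2_def munit_def)
qed


lemma indA:
  assumes h: "2 * (half::'a::comm_ring_1) = 1" and m: "1 \<le> m"
    and G_mul: "\<And>A B. A \<in> G \<Longrightarrow> B \<in> G \<Longrightarrow> A * B \<in> G"
    and G_F: "\<And>i l. 1 \<le> i \<Longrightarrow> i \<le> m \<Longrightarrow> F1 (2*m+1) i l \<in> G"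
  shows "(mat_of_map m (E_alpha m a) :: 'a mat) \<in> G"
proof -
  have single: "(mat_of_map m (E_alpha m e) :: 'a mat) \<in> G"
    if j: "1 \<le> j" "j \<le> m" and e: "\<And>i. 1 \<le> i \<Longrightarrow> i \<le> m \<Longrightarrow> i \<noteq> j \<Longrightarrow> e i = 0" for j e
  proof -
    have "(mat_of_map m (E_alpha m e) :: 'a mat) = mat_of_map m (E_alpha m (\<lambda>k. if k = j then -(2*(-(half * e j))) else 0))"
    proof (rule MA_cong[OF h])
      fix i assume "1 \<le> i" "i \<le> m"
      then show "e i = (if i = j then -(2*(-(half * e j))) else 0)"
        using e[of i] h by (auto simp: mult.assoc[symmetric])
    qed
    also have "\<dots> = F1 (2*m+1) j (-(half * e j))" by (rule F1_eq[OF h j, symmetric])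
    finally show ?thesis using G_F[OF j] by simp
  qed
  have main: "k \<le> m \<Longrightarrow> \<forall>a. (\<forall>i. k < i \<and> i \<le> m \<longrightarrow> a i = 0) \<longrightarrow> (mat_of_map m (E_alpha m a) :: 'a mat) \<in> G" for k
  proof (induction k)
    case 0
    show ?case
    proof (intro allI impI)
      fix a :: "nat \<Rightarrow> 'a" assume "\<forall>i. 0 < i \<and> i \<le> m \<longrightarrow> a i = 0"
      then show "mat_of_map m (E_alpha m a) \<in> G" using single[of 1 a] m by auto
    qed
  next
    case (Suc k)
    show ?case
    proof (intro allI impI)
      fix a :: "nat \<Rightarrow> 'a" assume a: "\<forall>i. Suc k < i \<and> i \<le> m \<longrightarrow> a i = 0"
      define x where "x = a(Suc k := 0)"
      define c where "c = (\<lambda>i. if i = Suc k then a (Suc k) else 0)"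
      have a_eq: "(\<lambda>i. x i + c i) = a" by (auto simp: x_def c_def)
      have IH: "\<forall>a. (\<forall>i. k < i \<and> i \<le> m \<longrightarrow> a i = 0) \<longrightarrow> (mat_of_map m (E_alpha m a) :: 'a mat) \<in> G"
        using Suc by simp
      have x1: "(mat_of_map m (E_alpha m x) :: 'a mat) \<in> G"
        using IH[rule_format, of x] a by (auto simp: x_def)
      have x2: "(mat_of_map m (E_alpha m (\<lambda>i. - x i)) :: 'a mat) \<in> G"
        using IH[rule_format, of "\<lambda>i. - x i"] a by (auto simp: x_def)
      have jj: "1 \<le> Suc k" "Suc k \<le> m" using Suc by auto
      have c1: "(mat_of_map m (E_alpha m c) :: 'a mat) \<in> G"
        by (rule single[OF jj]) (simp add: c_def)
      have c2: "(mat_of_map m (E_alpha m (\<lambda>i. -(half * c i))) :: 'a mat) \<in> G"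
        by (rule single[OF jj]) (simp add: c_def)
      have c3: "(mat_of_map m (E_alpha m (\<lambda>i. half * c i)) :: 'a mat) \<in> G"
        by (rule single[OF jj]) (simp add: c_def)
      have "(mat_of_map m (E_alpha m a) :: 'a mat) =
        mat_of_map m (E_alpha m x) * mat_of_map m (E_alpha m c) * mat_of_map m (E_alpha m x)
        * mat_of_map m (E_alpha m (\<lambda>i. -(half * c i))) * mat_of_map m (E_alpha m (\<lambda>i. - x i))
        * mat_of_map m (E_alpha m (\<lambda>i. half * c i))"
        using MA6[OF h, of m x c] unfolding a_eq .
      then show "(mat_of_map m (E_alpha m a) :: 'a mat) \<in> G"
        using x1 x2 c1 c2 c3 by (simp add: G_mul)
    qed
  qed
  have "\<forall>i. m < i \<and> i \<le> m \<longrightarrow> a i = 0" by auto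
  then show ?thesis using main[of m] by blast
qed

lemma indB:
  assumes h: "2 * (half::'a::comm_ring_1) = 1" and m: "1 \<le> m"
    and G_mul: "\<And>A B. A \<in> G \<Longrightarrow> B \<in> G \<Longrightarrow> A * B \<in> G"
    and G_F: "\<And>i l. 1 \<le> i \<Longrightarrow> i \<le> m \<Longrightarrow> F2 (2*m+1) i l \<in> G"
  shows "(mat_of_map m (E_beta m a) :: 'a mat) \<in> G"
proof -
  have single: "(mat_of_map m (E_beta m e) :: 'a mat) \<in> G"
    if j: "1 \<le> j" "j \<le> m" and e: "\<And>i. 1 \<le> i \<Longrightarrow> i \<le> m \<Longrightarrow> i \<noteq> j \<Longrightarrow> e i = 0" for j e
  proof -
    have "(mat_of_map m (E_beta m e) :: 'a mat) = mat_of_map m (E_beta m (\<lambda>k. if k = j then -(2*(-(half * e j))) else 0))"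
    proof (rule MB_cong[OF h])
      fix i assume "1 \<le> i" "i \<le> m"
      then show "e i = (if i = j then -(2*(-(half * e j))) else 0)"
        using e[of i] h by (auto simp: mult.assoc[symmetric])
    qed
    also have "\<dots> = F2 (2*m+1) j (-(half * e j))" by (rule F2_eq[OF h j, symmetric])
    finally show ?thesis using G_F[OF j] by simp
  qed
  have main: "k \<le> m \<Longrightarrow> \<forall>a. (\<forall>i. k < i \<and> i \<le> m \<longrightarrow> a i = 0) \<longrightarrow> (mat_of_map m (E_beta m a) :: 'a mat) \<in> G" for k
  proof (induction k)
    case 0
    show ?case
    proof (intro allI impI)
      fix a :: "nat \<Rightarrow> 'a" assume "\<forall>i. 0 < i \<and> i \<le> m \<longrightarrow> a i = 0"
      then show "mat_of_map m (E_beta m a) \<in> G" using single[of 1 a] m by auto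
    qed
  next
    case (Suc k)
    show ?case
    proof (intro allI impI)
      fix a :: "nat \<Rightarrow> 'a" assume a: "\<forall>i. Suc k < i \<and> i \<le> m \<longrightarrow> a i = 0"
      define x where "x = a(Suc k := 0)"
      define c where "c = (\<lambda>i. if i = Suc k then a (Suc k) else 0)"
      have a_eq: "(\<lambda>i. x i + c i) = a" by (auto simp: x_def c_def)
      have IH: "\<forall>a. (\<forall>i. k < i \<and> i \<le> m \<longrightarrow> a i = 0) \<longrightarrow> (mat_of_map m (E_beta m a) :: 'a mat) \<in> G"
        using Suc by simp
      have x1: "(mat_of_map m (E_beta m x) :: 'a mat) \<in> G"
        using IH[rule_format, of x] a by (auto simp: x_def)
      have x2: "(mat_of_map m (E_beta m (\<lambda>i. - x i)) :: 'a mat) \<in> G"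
        using IH[rule_format, of "\<lambda>i. - x i"] a by (auto simp: x_def)
      have jj: "1 \<le> Suc k" "Suc k \<le> m" using Suc by auto
      have c1: "(mat_of_map m (E_beta m c) :: 'a mat) \<in> G"
        by (rule single[OF jj]) (simp add: c_def)
      have c2: "(mat_of_map m (E_beta m (\<lambda>i. -(half * c i))) :: 'a mat) \<in> G"
        by (rule single[OF jj]) (simp add: c_def)
      have c3: "(mat_of_map m (E_beta m (\<lambda>i. half * c i)) :: 'a mat) \<in> G"
        by (rule single[OF jj]) (simp add: c_def)
      have "(mat_of_map m (E_beta m a) :: 'a mat) =
        mat_of_map m (E_beta m x) * mat_of_map m (E_beta m c) * mat_of_map m (E_beta m x)
        * mat_of_map m (E_beta m (\<lambda>i. -(half * c i))) * mat_of_map m (E_beta m (\<lambda>i. - x i))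
        * mat_of_map m (E_beta m (\<lambda>i. half * c i))"
        using MB6[OF h, of m x c] unfolding a_eq .
      then show "(mat_of_map m (E_beta m a) :: 'a mat) \<in> G"
        using x1 x2 c1 c2 c3 by (simp add: G_mul)
    qed
  qed
  have "\<forall>i. m < i \<and> i \<le> m \<longrightarrow> a i = 0" by auto
  then show ?thesis using main[of m] by blast
qed

definition Ug :: "nat \<Rightarrow> 'a::comm_ring_1 mat set" where
  "Ug N = {A \<in> carrier_mat N N. \<exists>B\<in>carrier_mat N N. A * B = 1\<^sub>m N \<and> B * A = 1\<^sub>m N}"

lemma inv_unique:
  assumes "A \<in> carrier_mat n n" "B \<in> carrier_mat n n" "C \<in> carrier_mat n n"
    "B * A = 1\<^sub>m n" "A * C = 1\<^sub>m n"
  shows "B = (C :: 'a::comm_ring_1 mat)"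
proof -
  have "B = B * (A * C)" using assms right_mult_one_mat[OF assms(2)] by simp
  also have "\<dots> = (B * A) * C" using assoc_mult_mat[OF assms(2,1,3)] by simp
  also have "\<dots> = C" using assms left_mult_one_mat[OF assms(3)] by simp
  finally show ?thesis .
qed

lemma gen_least:
  assumes "K \<subseteq> carrier_mat N N" "1\<^sub>m N \<in> K" "\<forall>A\<in>K. \<forall>B\<in>K. A * B \<in> K"
    "\<forall>A\<in>K. \<exists>B\<in>K. A * B = 1\<^sub>m N \<and> B * A = 1\<^sub>m N" "S \<subseteq> K"
  shows "gen_group N S \<subseteq> K"
  unfolding gen_group_def by (rule Inter_lower) (use assms in blast)

lemma Ug_props:
  shows "Ug N \<subseteq> carrier_mat N N" "1\<^sub>m N \<in> (Ug N :: 'a::comm_ring_1 mat set)"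
    "\<forall>A\<in>Ug N. \<forall>B\<in>Ug N. A * B \<in> (Ug N :: 'a mat set)"
    "\<forall>A\<in>Ug N. \<exists>B\<in>(Ug N :: 'a mat set). A * B = 1\<^sub>m N \<and> B * A = 1\<^sub>m N"
proof -
  show "Ug N \<subseteq> carrier_mat N N" by (auto simp: Ug_def)
  show "1\<^sub>m N \<in> (Ug N :: 'a mat set)" unfolding Ug_def by (auto intro!: bexI[of _ "1\<^sub>m N"])
  show "\<forall>A\<in>Ug N. \<forall>B\<in>Ug N. A * B \<in> (Ug N :: 'a mat set)"
  proof (intro ballI)
    fix A B :: "'a mat" assume "A \<in> Ug N" "B \<in> Ug N"
    then obtain A' B' where A: "A \<in> carrier_mat N N" "A' \<in> carrier_mat N N" "A * A' = 1\<^sub>m N" "A' * A = 1\<^sub>m N"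
      and B: "B \<in> carrier_mat N N" "B' \<in> carrier_mat N N" "B * B' = 1\<^sub>m N" "B' * B = 1\<^sub>m N"
      unfolding Ug_def by blast
    have "A * B * (B' * A') = A * (B * (B' * A'))" using assoc_mult_mat[OF A(1) B(1) mult_carrier_mat[OF B(2) A(2)]] .
    also have "B * (B' * A') = (B * B') * A'" using assoc_mult_mat[OF B(1) B(2) A(2)] by simp
    also have "A * ((B * B') * A') = 1\<^sub>m N" using A B left_mult_one_mat[OF A(2)] by simp
    finally have 1: "A * B * (B' * A') = 1\<^sub>m N" .
    have "B' * A' * (A * B) = B' * (A' * (A * B))" using assoc_mult_mat[OF B(2) A(2) mult_carrier_mat[OF A(1) B(1)]] .
    also have "A' * (A * B) = (A' * A) * B" using assoc_mult_mat[OF A(2) A(1) B(1)] by simp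
    also have "B' * ((A' * A) * B) = 1\<^sub>m N" using A B left_mult_one_mat[OF B(1)] by simp
    finally have 2: "B' * A' * (A * B) = 1\<^sub>m N" .
    have c1: "A * B \<in> carrier_mat N N" using A(1) B(1) by (rule mult_carrier_mat)
    have c2: "B' * A' \<in> carrier_mat N N" using B(2) A(2) by (rule mult_carrier_mat)
    show "A * B \<in> Ug N" unfolding Ug_def using c1 c2 1 2 by blast
  qed
  show "\<forall>A\<in>Ug N. \<exists>B\<in>(Ug N :: 'a mat set). A * B = 1\<^sub>m N \<and> B * A = 1\<^sub>m N"
    unfolding Ug_def by blast
qed

lemma gen_props:
  assumes S: "S \<subseteq> (Ug N :: 'a::comm_ring_1 mat set)"
  shows "gen_group N S \<subseteq> carrier_mat N N" "1\<^sub>m N \<in> gen_group N S"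
    "\<forall>A\<in>gen_group N S. \<forall>B\<in>gen_group N S. A * B \<in> gen_group N S"
    "\<forall>A\<in>gen_group N S. \<exists>B\<in>gen_group N S. A * B = 1\<^sub>m N \<and> B * A = 1\<^sub>m N"
    "S \<subseteq> gen_group N S"
proof -
  have GU: "gen_group N S \<subseteq> Ug N" by (rule gen_least[OF Ug_props S])
  then show "gen_group N S \<subseteq> carrier_mat N N" using Ug_props(1) by blast
  show "1\<^sub>m N \<in> gen_group N S" unfolding gen_group_def by blast
  show "\<forall>A\<in>gen_group N S. \<forall>B\<in>gen_group N S. A * B \<in> gen_group N S" unfolding gen_group_def by blast
  show "S \<subseteq> gen_group N S" unfolding gen_group_def by blast
  show "\<forall>A\<in>gen_group N S. \<exists>B\<in>gen_group N S. A * B = 1\<^sub>m N \<and> B * A = 1\<^sub>m N"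
  proof
    fix A assume A: "A \<in> gen_group N S"
    then have "A \<in> Ug N" using GU by blast
    then obtain B where B: "B \<in> carrier_mat N N" "A * B = 1\<^sub>m N" "B * A = 1\<^sub>m N" and Ac: "A \<in> carrier_mat N N"
      unfolding Ug_def by blast
    have "B \<in> gen_group N S"
      unfolding gen_group_def
    proof
      fix H assume H: "H \<in> {H. H \<subseteq> carrier_mat N N \<and> 1\<^sub>m N \<in> H \<and> (\<forall>A\<in>H. \<forall>B\<in>H. A * B \<in> H)
         \<and> (\<forall>A\<in>H. \<exists>B\<in>H. A * B = 1\<^sub>m N \<and> B * A = 1\<^sub>m N) \<and> S \<subseteq> H}"
      have "A \<in> H" using A H unfolding gen_group_def by blast
      then obtain B' where B': "B' \<in> H" "A * B' = 1\<^sub>m N" "B' * A = 1\<^sub>m N" using H by blast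
      have "B' \<in> carrier_mat N N" using B' H by blast
      then have "B = B'" using inv_unique[OF Ac B(1) _ B(3) B'(2)] by simp
      then show "B \<in> H" using B' by simp
    qed
    then show "\<exists>B\<in>gen_group N S. A * B = 1\<^sub>m N \<and> B * A = 1\<^sub>m N" using B by blast
  qed
qed

lemma gen_sub:
  assumes "S \<subseteq> (Ug N :: 'a::comm_ring_1 mat set)" "T \<subseteq> gen_group N S"
  shows "gen_group N T \<subseteq> gen_group N S"
  using gen_least[OF gen_props(1-4)[OF assms(1)] assms(2)] .

theorem mainTheorem4:
  fixes m :: nat
  assumes "m \<ge> 1"
    and "\<exists>u :: 'a :: comm_ring_1. 2 * u = 1"
  shows "(EO_QH m :: 'a mat set) = EO_odd m"
proof -
  have h: "2 * (half::'a) = 1" by (rule half2[OF assms(2)])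
  define SQ :: "'a mat set" where "SQ = {mat_of_map m (E_alpha m a) | a. True} \<union> {mat_of_map m (E_beta m b) | b. True}"
  define SO :: "'a mat set" where "SO = {F1 (2*m+1) i l | i l. 1 \<le> i \<and> i \<le> m} \<union> {F2 (2*m+1) i l | i l. 1 \<le> i \<and> i \<le> m}"
  have Q: "EO_QH m = gen_group (2*m+1) SQ" unfolding EO_QH_def SQ_def ..
  have O: "EO_odd m = gen_group (2*m+1) SO" unfolding EO_odd_def SO_def ..
  have SQU: "SQ \<subseteq> Ug (2*m+1)"
  proof
    fix A assume "A \<in> SQ"
    then consider a where "A = mat_of_map m (E_alpha m a)" | b where "A = mat_of_map m (E_beta m b)"
      unfolding SQ_def by blast
    then show "A \<in> Ug (2*m+1)"
    proof cases
      case 1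
      have "mat_of_map m (E_alpha m (\<lambda>i. - a i)) * (mat_of_map m (E_alpha m a) :: 'a mat) = 1\<^sub>m (2*m+1)"
        using MA_inv[OF h, of m "\<lambda>i. - a i"] by simp
      then show ?thesis unfolding Ug_def 1 using MA_inv[OF h, of m a] MA_carrier
        by blast
    next
      case 2
      have "mat_of_map m (E_beta m (\<lambda>i. - b i)) * (mat_of_map m (E_beta m b) :: 'a mat) = 1\<^sub>m (2*m+1)"
        using MB_inv[OF h, of m "\<lambda>i. - b i"] by simp
      then show ?thesis unfolding Ug_def 2 using MB_inv[OF h, of m b] MA_carrier
        by blast
    qed
  qed
  have SOQ: "SO \<subseteq> SQ"
  proof
    fix A assume "A \<in> SO"
    then obtain i l where i: "1 \<le> i" "i \<le> m" and "A = F1 (2*m+1) i l \<or> A = F2 (2*m+1) i l"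
      unfolding SO_def by blast
    then show "A \<in> SQ" unfolding SQ_def using F1_eq[OF h i, of l] F2_eq[OF h i, of l] by blast
  qed
  have SOU: "SO \<subseteq> Ug (2*m+1)" using SOQ SQU by blast
  have 1: "gen_group (2*m+1) SO \<subseteq> gen_group (2*m+1) SQ"
    by (rule gen_sub[OF SQU]) (use SOQ gen_props(5)[OF SQU] in blast)
  have mulO: "\<And>A B. A \<in> gen_group (2*m+1) SO \<Longrightarrow> B \<in> gen_group (2*m+1) SO \<Longrightarrow> A * B \<in> gen_group (2*m+1) SO"
    using gen_props(3)[OF SOU] by blast
  have F1O: "\<And>i l. 1 \<le> i \<Longrightarrow> i \<le> m \<Longrightarrow> F1 (2*m+1) i l \<in> gen_group (2*m+1) SO"
    using gen_props(5)[OF SOU] unfolding SO_def by blast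
  have F2O: "\<And>i l. 1 \<le> i \<Longrightarrow> i \<le> m \<Longrightarrow> F2 (2*m+1) i l \<in> gen_group (2*m+1) SO"
    using gen_props(5)[OF SOU] unfolding SO_def by blast
  have "SQ \<subseteq> gen_group (2*m+1) SO"
    unfolding SQ_def using indA[OF h assms(1) mulO F1O] indB[OF h assms(1) mulO F2O] by blast
  then have 2: "gen_group (2*m+1) SQ \<subseteq> gen_group (2*m+1) SO" by (rule gen_sub[OF SOU])
  show ?thesis unfolding Q O using 1 2 by blast
qed

end
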